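(* Let $\mathcal{H}$ be a complex Hilbert space and let $A\in\mathcal{B}(\mathcal{H})$ be a positive operator with $\dim R(A)\ge 2$. Let $T\in\mathcal{B}_A(\mathcal{H})$ and $q\in\mathbb{C}$ with $|q|\le 1$. Then \[ w_{q,A}(T)\le\Big(|q|^2w_A^2(T)+(1-|q|^2)\|T\|_A^2+2|q|\sqrt{1-|q|^2}\,w_A(T)\|T\|_A\Big)^{1/2}. \]
   Context: $A$ induces the semi-inner product $\langle x,y\rangle_A=\langle Ax,y\rangle$ and seminorm $\|x\|_A=\sqrt{\langle x,x\rangle_A}$. For an operator $S$, $\|S\|_A=\sup\{\|Sx\|_A/\|x\|_A : x\in\overline{R(A)},\,x\neq 0\}$. $\mathcal{B}_A(\mathcal{H})$ is the set of operators $T$ admitting an $A$-adjoint, i.e. an operator $W$ with $\langle Tx,y\rangle_A=\langle x,Wy\rangle_A$ for all $x,y$. The $A$-$q$-numerical radius is $w_{q,A}(T)=\sup\{|\langle Tx,y\rangle_A| : \|x\|_A=\|y\|_A=1,\ \langle x,y\rangle_A=q\}$, and $w_A(T)=w_{1,A}(T)=\sup\{|\langle Tx,x\rangle_A|:\|x\|_A=1\}$ is the $A$-numerical radius. *)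

theory Defs
  imports "HOL-Analysis.Analysis"
begin

text \<open>A complex Hilbert space is modelled
as a real Hilbert space (type class real_inner + complete_space, real inner product = Re of
the complex one) together with a complex structure J (multiplication by i), which is a
real-linear isometry with J(J x) = -x.  The complex inner product (linear in the first
argument) is then  <x,y> = x . y + i (x . J y).\<close>

definition complex_structure :: "('a::real_inner \<Rightarrow> 'a) \<Rightarrow> bool" where
  "complex_structure J \<longleftrightarrow> linear J \<and> (\<forall>x. J (J x) = - x) \<and> (\<forall>x y. J x \<bullet> J y = x \<bullet> y)"

definition scaleC :: "('a::real_inner \<Rightarrow> 'a) \<Rightarrow> complex \<Rightarrow> 'a \<Rightarrow> 'a" where
  "scaleC J c x = Re c *\<^sub>R x + Im c *\<^sub>R J x"

definition cinner :: "('a::real_inner \<Rightarrow> 'a) \<Rightarrow> 'a \<Rightarrow> 'a \<Rightarrow> complex" where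
  "cinner J x y = Complex (x \<bullet> y) (x \<bullet> J y)"

definition bounded_clinear_op :: "('a::real_inner \<Rightarrow> 'a) \<Rightarrow> ('a \<Rightarrow> 'a) \<Rightarrow> bool" where
  "bounded_clinear_op J T \<longleftrightarrow> bounded_linear T \<and> (\<forall>x. T (J x) = J (T x))"

definition positive_op :: "('a::real_inner \<Rightarrow> 'a) \<Rightarrow> ('a \<Rightarrow> 'a) \<Rightarrow> bool" where
  "positive_op J A \<longleftrightarrow> bounded_clinear_op J A \<and>
     (\<forall>x. Im (cinner J (A x) x) = 0 \<and> Re (cinner J (A x) x) \<ge> 0)"

definition range_dim_ge_2 :: "('a::real_inner \<Rightarrow> 'a) \<Rightarrow> ('a \<Rightarrow> 'a) \<Rightarrow> bool" where
  "range_dim_ge_2 J A \<longleftrightarrow> (\<exists>u\<in>range A. \<exists>v\<in>range A.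
      \<forall>a b. scaleC J a u + scaleC J b v = 0 \<longrightarrow> a = 0 \<and> b = 0)"

definition A_inner :: "('a::real_inner \<Rightarrow> 'a) \<Rightarrow> ('a \<Rightarrow> 'a) \<Rightarrow> 'a \<Rightarrow> 'a \<Rightarrow> complex" where
  "A_inner J A x y = cinner J (A x) y"

definition A_norm :: "('a::real_inner \<Rightarrow> 'a) \<Rightarrow> ('a \<Rightarrow> 'a) \<Rightarrow> 'a \<Rightarrow> real" where
  "A_norm J A x = sqrt (Re (A_inner J A x x))"

definition A_opnorm :: "('a::real_inner \<Rightarrow> 'a) \<Rightarrow> ('a \<Rightarrow> 'a) \<Rightarrow> ('a \<Rightarrow> 'a) \<Rightarrow> real" where
  "A_opnorm J A S = Sup {A_norm J A (S x) / A_norm J A x | x. x \<in> closure (range A) \<and> x \<noteq> 0}"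

definition B_A :: "('a::real_inner \<Rightarrow> 'a) \<Rightarrow> ('a \<Rightarrow> 'a) \<Rightarrow> ('a \<Rightarrow> 'a) set" where
  "B_A J A = {T. bounded_clinear_op J T \<and>
     (\<exists>W. bounded_clinear_op J W \<and> (\<forall>x y. A_inner J A (T x) y = A_inner J A x (W y)))}"

definition w_qA :: "('a::real_inner \<Rightarrow> 'a) \<Rightarrow> ('a \<Rightarrow> 'a) \<Rightarrow> complex \<Rightarrow> ('a \<Rightarrow> 'a) \<Rightarrow> real" where
  "w_qA J A q T = Sup {cmod (A_inner J A (T x) y) | x y.
      A_norm J A x = 1 \<and> A_norm J A y = 1 \<and> A_inner J A x y = q}"

definition w_A :: "('a::real_inner \<Rightarrow> 'a) \<Rightarrow> ('a \<Rightarrow> 'a) \<Rightarrow> ('a \<Rightarrow> 'a) \<Rightarrow> real" where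
  "w_A J A T = Sup {cmod (A_inner J A (T x) x) | x. A_norm J A x = 1}"

end

theory Submission
  imports Defs
begin


locale setting =
  fixes J :: "'a::{real_inner, complete_space} \<Rightarrow> 'a" and A :: "'a \<Rightarrow> 'a"
  assumes cs: "complex_structure J" and pos: "positive_op J A"
begin

lemma J_lin: "linear J" using cs by (simp add: complex_structure_def)
lemma JJ[simp]: "J (J x) = - x" using cs by (simp add: complex_structure_def)
lemma J_iso[simp]: "J x \<bullet> J y = x \<bullet> y" using cs by (simp add: complex_structure_def)
lemma J_skew: "J x \<bullet> y = - (x \<bullet> J y)"
proof -
  have "J (J x) \<bullet> J y = J x \<bullet> y" by (rule J_iso)
  thus ?thesis by (metis JJ inner_minus_left)
qed
lemma J_add[simp]: "J (x + y) = J x + J y" using J_lin by (simp add: linear_add)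
lemma J_diff[simp]: "J (x - y) = J x - J y" using J_lin by (simp add: linear_diff)
lemma J_scale[simp]: "J (c *\<^sub>R x) = c *\<^sub>R J x" using J_lin by (simp add: linear_scale)
lemma J_neg[simp]: "J (- x) = - J x" using J_lin by (simp add: linear_neg)
lemma J_0[simp]: "J 0 = 0" using J_lin by (simp add: linear_0)

lemma A_bl: "bounded_linear A" using pos by (simp add: positive_op_def bounded_clinear_op_def)
lemma A_lin: "linear A" using A_bl bounded_linear.linear by blast
lemma AJ: "A (J x) = J (A x)" using pos by (simp add: positive_op_def bounded_clinear_op_def)
lemma A_add[simp]: "A (x + y) = A x + A y" using A_lin by (simp add: linear_add)
lemma A_diff[simp]: "A (x - y) = A x - A y" using A_lin by (simp add: linear_diff)
lemma A_scale[simp]: "A (c *\<^sub>R x) = c *\<^sub>R A x" using A_lin by (simp add: linear_scale)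
lemma A_neg[simp]: "A (- x) = - A x" using A_lin by (simp add: linear_neg)
lemma A_0[simp]: "A 0 = 0" using A_lin by (simp add: linear_0)

lemma AxJx: "A x \<bullet> J x = 0"
  using pos unfolding positive_op_def cinner_def by simp
lemma Axx: "A x \<bullet> x \<ge> 0"
  using pos unfolding positive_op_def cinner_def by simp

lemma A_sym: "A x \<bullet> y = x \<bullet> A y"
proof -
  have h: "A u \<bullet> J v + A v \<bullet> J u = 0" for u v
  proof -
    have "A (u+v) \<bullet> J (u+v) = 0" by (rule AxJx)
    thus ?thesis using AxJx[of u] AxJx[of v] by (simp add: inner_add_left inner_add_right)
  qed
  have "A x \<bullet> J (J y) + A (J y) \<bullet> J x = 0" by (rule h)
  hence "- (A x \<bullet> y) + J (A y) \<bullet> J x = 0" by (simp add: AJ)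
  hence "A y \<bullet> x = A x \<bullet> y" by simp
  thus ?thesis by (metis inner_commute)
qed

lemma b_Jsym: "A (J x) \<bullet> y = - (A x \<bullet> J y)"
  by (simp add: AJ J_skew)
lemma b_JJ[simp]: "A (J x) \<bullet> J y = A x \<bullet> y"
  by (simp add: AJ)
lemma b_comm: "A x \<bullet> y = A y \<bullet> x"
  by (metis A_sym inner_commute)

lemma CS: "(A x \<bullet> y)^2 \<le> (A x \<bullet> x) * (A y \<bullet> y)"
proof -
  have q: "0 \<le> A x \<bullet> x + 2 * t * (A x \<bullet> y) + t^2 * (A y \<bullet> y)" for t
  proof -
    have "0 \<le> A (x + t *\<^sub>R y) \<bullet> (x + t *\<^sub>R y)" by (rule Axx)
    also have "\<dots> = A x \<bullet> x + 2 * t * (A x \<bullet> y) + t^2 * (A y \<bullet> y)"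
      using b_comm[of y x] by (simp add: inner_add_left inner_add_right algebra_simps power2_eq_square)
    finally show ?thesis .
  qed
  show ?thesis
  proof (cases "A y \<bullet> y = 0")
    case True
    show ?thesis
    proof (rule ccontr)
      assume "\<not> ?thesis"
      hence ne: "A x \<bullet> y \<noteq> 0" using True by simp
      have "0 \<le> A x \<bullet> x + 2 * (- (A x \<bullet> x + 1) / (2 * (A x \<bullet> y))) * (A x \<bullet> y)"
        using q[of "- (A x \<bullet> x + 1) / (2 * (A x \<bullet> y))"] True by simp
      also have "\<dots> = -1" using ne by (simp add: field_simps)
      finally show False by simp
    qed
  next
    case False
    hence p: "A y \<bullet> y > 0" using Axx[of y] by simp
    have "0 \<le> A x \<bullet> x + 2 * (- (A x \<bullet> y) / (A y \<bullet> y)) * (A x \<bullet> y) + (- (A x \<bullet> y) / (A y \<bullet> y))^2 * (A y \<bullet> y)"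
      by (rule q)
    also have "\<dots> = A x \<bullet> x - (A x \<bullet> y)^2 / (A y \<bullet> y)"
      using p by (simp add: field_simps power2_eq_square)
    finally have "(A x \<bullet> y)^2 / (A y \<bullet> y) \<le> A x \<bullet> x" by simp
    thus ?thesis using p by (simp add: divide_le_eq mult.commute)
  qed
qed

lemma A_norm_eq: "A_norm J A z = sqrt (A z \<bullet> z)"
  by (simp add: A_norm_def A_inner_def cinner_def)
lemma A_inner_eq: "A_inner J A x y = Complex (A x \<bullet> y) (A x \<bullet> J y)"
  by (simp add: A_inner_def cinner_def)

lemma cCS: "cmod (A_inner J A u v) \<le> A_norm J A u * A_norm J A v"
proof -
  define a where "a = A u \<bullet> v"
  define b where "b = A u \<bullet> J v"
  define v' where "v' = a *\<^sub>R v + b *\<^sub>R J v"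
  have 1: "A u \<bullet> v' = a^2 + b^2"
    by (simp add: v'_def a_def b_def inner_add_right power2_eq_square)
  have 2: "A v' \<bullet> v' = (a^2 + b^2) * (A v \<bullet> v)"
    using AxJx[of v] b_Jsym[of v v] by (simp add: v'_def inner_add_right inner_add_left power2_eq_square algebra_simps)
  have "(a^2+b^2)^2 \<le> (A u \<bullet> u) * ((a^2 + b^2) * (A v \<bullet> v))"
    using CS[of u v'] 1 2 by simp
  hence "a^2 + b^2 \<le> (A u \<bullet> u) * (A v \<bullet> v)"
  proof (cases "a^2+b^2 = 0")
    case True thus ?thesis using Axx[of u] Axx[of v] by simp
  next
    case False
    hence p: "a^2+b^2 > 0" by (simp add: add_nonneg_nonneg order_less_le)
    assume "(a^2+b^2)^2 \<le> (A u \<bullet> u) * ((a^2 + b^2) * (A v \<bullet> v))"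
    hence "(a^2+b^2) * (a^2+b^2) \<le> (a^2 + b^2) * ((A u \<bullet> u) * (A v \<bullet> v))"
      by (simp add: power2_eq_square algebra_simps)
    thus ?thesis using p by simp
  qed
  hence "sqrt (a^2 + b^2) \<le> sqrt ((A u \<bullet> u) * (A v \<bullet> v))" by simp
  thus ?thesis by (simp add: norm_complex_def A_inner_eq A_norm_eq a_def b_def real_sqrt_mult)
qed

lemma rCS: "A u \<bullet> v \<le> A_norm J A u * A_norm J A v"
proof -
  have "\<bar>A u \<bullet> v\<bar> = sqrt ((A u \<bullet> v)^2)" by simp
  also have "\<dots> \<le> sqrt ((A u \<bullet> u) * (A v \<bullet> v))" using CS[of u v] real_sqrt_le_mono by blast
  finally show ?thesis by (simp add: A_norm_eq real_sqrt_mult)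
qed

lemma nA_nonneg: "A_norm J A z \<ge> 0" by (simp add: A_norm_eq Axx)
lemma nA_sq: "(A_norm J A z)^2 = A z \<bullet> z" by (metis A_norm_eq Axx real_sqrt_pow2)

lemma tri: "A_norm J A (u + v) \<le> A_norm J A u + A_norm J A v"
proof -
  have "(A_norm J A (u + v))^2 = (A_norm J A u)^2 + 2 * (A u \<bullet> v) + (A_norm J A v)^2"
    using b_comm[of v u] by (simp add: nA_sq inner_add_left inner_add_right)
  also have "\<dots> \<le> (A_norm J A u + A_norm J A v)^2"
    using rCS[of u v] by (simp add: power2_eq_square algebra_simps)
  finally show ?thesis using nA_nonneg
    by (meson add_nonneg_nonneg power2_le_imp_le)
qed

lemma nA_neg[simp]: "A_norm J A (- z) = A_norm J A z" by (simp add: A_norm_eq)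

lemma tri_diff: "A_norm J A (u - v) \<le> A_norm J A u + A_norm J A v"
  using tri[of u "- v"] by simp

definition cA where "cA = onorm A + 1"
lemma cA_pos: "cA > 0" using onorm_pos_le[OF A_bl] by (simp add: cA_def)

lemma Az_sq: "(norm (A z))^2 \<le> cA * (A z \<bullet> z)"
proof -
  have e: "A z \<bullet> A z = (norm (A z))^2" by (simp add: power2_norm_eq_inner)
  have "A (A z) \<bullet> A z \<le> norm (A (A z)) * norm (A z)" by (rule norm_cauchy_schwarz)
  also have "\<dots> \<le> onorm A * norm (A z) * norm (A z)"
    by (simp add: mult_right_mono onorm[OF A_bl])
  also have "\<dots> \<le> cA * (norm (A z))^2" by (simp add: cA_def power2_eq_square algebra_simps)
  finally have h1: "A (A z) \<bullet> A z \<le> cA * (norm (A z))^2" .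
  have "((norm (A z))^2)^2 = (A z \<bullet> A z)^2" using e by simp
  also have "\<dots> = (A z \<bullet> z)^2 * 0 + (A (A z) \<bullet> z)^2" by (simp add: A_sym)
  finally have "((norm (A z))^2)^2 = (A (A z) \<bullet> z)^2" by simp
  also have "\<dots> \<le> (A (A z) \<bullet> A z) * (A z \<bullet> z)" using CS[of "A z" z] by (simp add: mult.commute)
  also have "\<dots> \<le> cA * (norm (A z))^2 * (A z \<bullet> z)" using h1 Axx[of z] by (simp add: mult_right_mono)
  finally have h: "((norm (A z))^2)^2 \<le> (norm (A z))^2 * (cA * (A z \<bullet> z))" by (simp add: algebra_simps)
  show ?thesis
  proof (cases "norm (A z) = 0")
    case True thus ?thesis using Axx[of z] cA_pos by simp
  next
    case False
    define n where "n = (norm (A z))^2"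
    have "n > 0" using False by (simp add: n_def)
    moreover have "n * n \<le> n * (cA * (A z \<bullet> z))" using h unfolding n_def[symmetric] by (simp add: power2_eq_square)
    ultimately have "n \<le> cA * (A z \<bullet> z)" by simp
    thus ?thesis by (simp add: n_def)
  qed
qed

definition Bop where "Bop z = z - (1/cA) *\<^sub>R A z"

lemma B_dec: "A z \<bullet> z \<le> cA * ((norm z)^2 - (norm (Bop z))^2)"
proof -
  have c: "cA > 0" by (rule cA_pos)
  have "(norm (Bop z))^2 = (norm z)^2 - 2 / cA * (A z \<bullet> z) + (norm (A z))^2 / cA^2"
    unfolding Bop_def power2_norm_eq_inner using b_comm[of z z]
    by (simp add: inner_diff_left inner_diff_right power2_eq_square algebra_simps inner_commute[of z "A z"])
  hence "cA * ((norm z)^2 - (norm (Bop z))^2) = 2 * (A z \<bullet> z) - (norm (A z))^2 / cA"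
    using c by (simp add: field_simps power2_eq_square)
  moreover have "(norm (A z))^2 / cA \<le> A z \<bullet> z" using Az_sq[of z] c by (simp add: divide_le_eq mult.commute)
  ultimately show ?thesis by simp
qed

lemma B_range: "\<exists>w. x - (Bop^^n) x = A w"
proof (induction n)
  case 0 show ?case by (rule exI[of _ 0]) simp
next
  case (Suc n)
  then obtain w where w: "x - (Bop^^n) x = A w" by blast
  have "x - (Bop^^Suc n) x = A (w + (1/cA) *\<^sub>R (Bop^^n) x)"
    using w by (simp add: Bop_def algebra_simps)
  thus ?case by blast
qed

lemma B_sum: "(\<Sum>k<n. A ((Bop^^k) x) \<bullet> (Bop^^k) x) \<le> cA * ((norm x)^2 - (norm ((Bop^^n) x))^2)"
proof (induction n)
  case 0 show ?case by simp
next
  case (Suc n)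
  have "(\<Sum>k<Suc n. A ((Bop^^k) x) \<bullet> (Bop^^k) x) = (\<Sum>k<n. A ((Bop^^k) x) \<bullet> (Bop^^k) x) + A ((Bop^^n) x) \<bullet> (Bop^^n) x"
    by simp
  also have "\<dots> \<le> cA * ((norm x)^2 - (norm ((Bop^^n) x))^2) + cA * ((norm ((Bop^^n) x))^2 - (norm (Bop ((Bop^^n) x)))^2)"
    using Suc B_dec by (meson add_mono)
  also have "\<dots> = cA * ((norm x)^2 - (norm ((Bop^^Suc n) x))^2)" by (simp add: algebra_simps)
  finally show ?case .
qed

lemma approx: assumes "d > 0" shows "\<exists>w. A_norm J A (x - A w) < d"
proof (rule ccontr)
  assume "\<not> ?thesis"
  hence all: "A_norm J A (x - A w) \<ge> d" for w by (meson not_less)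
  have ge: "A ((Bop^^k) x) \<bullet> (Bop^^k) x \<ge> d^2" for k
  proof -
    obtain w where w: "x - (Bop^^k) x = A w" using B_range by blast
    have "(Bop^^k) x = x - A w" using w by (simp add: algebra_simps)
    hence "A_norm J A ((Bop^^k) x) \<ge> d" using all by simp
    hence "(A_norm J A ((Bop^^k) x))^2 \<ge> d^2" using assms by (simp add: power_mono)
    thus ?thesis by (simp add: nA_sq)
  qed
  obtain n :: nat where n: "real n > cA * (norm x)^2 / d^2" using reals_Archimedean2 by blast
  have "real n * d^2 = (\<Sum>k<n. d^2)" by simp
  also have "\<dots> \<le> (\<Sum>k<n. A ((Bop^^k) x) \<bullet> (Bop^^k) x)" by (rule sum_mono) (rule ge)
  also have "\<dots> \<le> cA * ((norm x)^2 - (norm ((Bop^^n) x))^2)" by (rule B_sum)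
  also have "\<dots> \<le> cA * (norm x)^2" using cA_pos by (simp add: mult_left_mono)
  finally have "real n * d^2 \<le> cA * (norm x)^2" .
  moreover have "cA * (norm x)^2 < real n * d^2" using n assms by (simp add: divide_less_eq)
  ultimately show False by simp
qed

end


locale setting2 = setting +
  fixes T W :: "'a \<Rightarrow> 'a"
  assumes Tb: "bounded_clinear_op J T" and Wb: "bounded_clinear_op J W"
    and adj: "\<forall>x y. A_inner J A (T x) y = A_inner J A x (W y)"
begin

lemma T_bl: "bounded_linear T" using Tb by (simp add: bounded_clinear_op_def)
lemma W_bl: "bounded_linear W" using Wb by (simp add: bounded_clinear_op_def)
lemma TJ: "T (J x) = J (T x)" using Tb by (simp add: bounded_clinear_op_def)
lemma T_lin: "linear T" using T_bl bounded_linear.linear by blast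
lemma T_add[simp]: "T (x + y) = T x + T y" using T_lin by (simp add: linear_add)
lemma T_diff[simp]: "T (x - y) = T x - T y" using T_lin by (simp add: linear_diff)
lemma T_scale[simp]: "T (c *\<^sub>R x) = c *\<^sub>R T x" using T_lin by (simp add: linear_scale)
lemma T_0[simp]: "T 0 = 0" using T_lin by (simp add: linear_0)

lemma radj: "A (T x) \<bullet> y = A x \<bullet> W y"
proof -
  have "A_inner J A (T x) y = A_inner J A x (W y)" using adj by blast
  thus ?thesis by (simp add: A_inner_eq)
qed

definition S where "S = W \<circ> T"
lemma S_bl: "bounded_linear S" unfolding S_def o_def by (rule bounded_linear_compose[OF W_bl T_bl])

lemma S_sym: "A (S x) \<bullet> y = A x \<bullet> S y"
proof -
  have "A (S x) \<bullet> y = A y \<bullet> W (T x)" unfolding S_def o_def by (rule b_comm)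
  also have "\<dots> = A (T y) \<bullet> T x" by (rule radj[symmetric])
  also have "\<dots> = A (T x) \<bullet> T y" by (rule b_comm)
  also have "\<dots> = A x \<bullet> S y" unfolding S_def o_def by (rule radj)
  finally show ?thesis .
qed

lemma Sm_sym: "A ((S^^m) x) \<bullet> y = A x \<bullet> (S^^m) y"
proof (induction m arbitrary: x y)
  case 0 show ?case by simp
next
  case (Suc m)
  have "A ((S^^Suc m) x) \<bullet> y = A (S ((S^^m) x)) \<bullet> y" by simp
  also have "\<dots> = A ((S^^m) x) \<bullet> S y" by (rule S_sym)
  also have "\<dots> = A x \<bullet> (S^^m) (S y)" by (rule Suc)
  also have "\<dots> = A x \<bullet> (S^^Suc m) y" by (simp only: funpow_Suc_right comp_apply)
  finally show ?case .
qed

definition Q where "Q z = A z \<bullet> z"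
lemma Q_nonneg: "Q z \<ge> 0" by (simp add: Q_def Axx)

lemma Q_step: "(Q ((S^^m) x))^2 \<le> Q x * Q ((S^^(2*m)) x)"
proof -
  have "Q ((S^^m) x) = A x \<bullet> (S^^m) ((S^^m) x)" by (simp add: Q_def Sm_sym)
  also have "\<dots> = A x \<bullet> (S^^(2*m)) x" by (simp add: mult_2 funpow_add)
  finally have "Q ((S^^m) x) = A x \<bullet> (S^^(2*m)) x" .
  thus ?thesis using CS[of x "(S^^(2*m)) x"] by (simp add: Q_def)
qed

lemma Q_double:
  assumes h: "(Q (S x))^k \<le> (Q x)^(k - 1) * Q ((S^^k) x)" and k: "k \<ge> 1"
  shows "(Q (S x))^(2*k) \<le> (Q x)^(2*k - 1) * Q ((S^^(2*k)) x)"
proof -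
  define a where "a = Q (S x)"
  define b where "b = Q x"
  define c where "c = Q ((S^^k) x)"
  define d where "d = Q ((S^^(2*k)) x)"
  have a0: "a \<ge> 0" and b0: "b \<ge> 0" and c0: "c \<ge> 0" by (simp_all add: a_def b_def c_def Q_nonneg)
  have ex: "(k-1) + (k-1) + 1 = 2*k - 1" using k by simp
  have h': "a^k \<le> b^(k-1) * c" using h by (simp add: a_def b_def c_def)
  have st: "c^2 \<le> b * d" using Q_step[of k x] by (simp add: b_def c_def d_def)
  have "a^(2*k) = (a^k)^2" unfolding mult.commute[of 2 k] by (rule power_mult)
  also have "\<dots> \<le> (b^(k-1) * c)^2" using h' a0 by (simp add: power_mono)
  also have "\<dots> = b^(k-1) * b^(k-1) * c^2" by (simp add: power2_eq_square)
  also have "\<dots> \<le> b^(k-1) * b^(k-1) * (b * d)" using st b0 by (simp add: mult_left_mono)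
  also have "\<dots> = b^((k-1) + (k-1) + 1) * d" by (simp only: power_add power_one_right mult.assoc)
  also have "\<dots> = b^(2*k - 1) * d" by (simp only: ex)
  finally have "a^(2*k) \<le> b^(2*k-1) * d" .
  thus ?thesis by (simp only: a_def b_def d_def)
qed

lemma Q_pow2: "(Q (S x))^(2^n) \<le> (Q x)^(2^n - 1) * Q ((S^^(2^n)) x)"
proof (induction n)
  case 0
  have f1: "(S^^1) x = S x" by (simp only: One_nat_def funpow.simps comp_apply id_apply)
  have g: "(Q (S x))^(2^0) = Q (S x)" by simp
  have h: "(Q x)^(2^0 - 1) = 1" by simp
  have i: "(S^^(2^0)) x = S x" using f1 by simp
  show ?case unfolding g h i by simp
next
  case (Suc n)
  have e: "(2::nat)^Suc n = 2*2^n" by simp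
  have "(1::nat) \<le> 2^n" by simp
  have k1: "(1::nat) \<le> 2^n" by simp
  show ?case unfolding power_Suc by (rule Q_double[OF Suc k1])
qed

definition M where "M = onorm S + 1"
lemma M_pos: "M \<ge> 1" using onorm_pos_le[OF S_bl] by (simp add: M_def)

lemma norm_Sm: "norm ((S^^m) x) \<le> M^m * norm x"
proof (induction m)
  case 0 show ?case by simp
next
  case (Suc m)
  have "norm ((S^^Suc m) x) = norm (S ((S^^m) x))" by simp
  also have "\<dots> \<le> onorm S * norm ((S^^m) x)" by (rule onorm[OF S_bl])
  also have "\<dots> \<le> M * norm ((S^^m) x)" by (simp add: M_def mult_right_mono)
  also have "\<dots> \<le> M * (M^m * norm x)" using Suc M_pos by (simp add: mult_left_mono)
  finally show ?case by (simp add: mult.assoc)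
qed

lemma Q_le: "Q z \<le> cA * (norm z)^2"
proof -
  have "Q z \<le> norm (A z) * norm z" unfolding Q_def by (rule norm_cauchy_schwarz)
  also have "\<dots> \<le> onorm A * norm z * norm z" by (simp add: mult_right_mono onorm[OF A_bl])
  also have "\<dots> \<le> cA * (norm z)^2" by (simp add: cA_def power2_eq_square algebra_simps)
  finally show ?thesis .
qed

lemma Q_Sm_le: "Q ((S^^m) x) \<le> cA * (norm x)^2 * (M^2)^m"
proof -
  have "Q ((S^^m) x) \<le> cA * (norm ((S^^m) x))^2" by (rule Q_le)
  also have "\<dots> \<le> cA * (M^m * norm x)^2"
    using norm_Sm[of m x] cA_pos by (simp add: power_mono mult_left_mono)
  also have "\<dots> = cA * (norm x)^2 * (M^2)^m" by (simp add: power_mult_distrib power_mult[symmetric] mult.commute)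
  finally show ?thesis .
qed

lemma geom_bound:
  fixes r C :: real
  assumes r: "r > 1" and b: "\<And>n. r^(2^n) \<le> C"
  shows False
proof -
  obtain n :: nat where n: "real n > C / (r - 1)" using reals_Archimedean2 by blast
  have "1 + real (2^n) * (r - 1) \<le> (1 + (r - 1))^(2^n)" by (rule Bernoulli_inequality) (use r in simp)
  also have "\<dots> = r^(2^n)" by simp
  also have "\<dots> \<le> C" by (rule b)
  finally have 1: "1 + real (2^n) * (r - 1) \<le> C" .
  have "real n \<le> real (2^n)" by (simp add: less_imp_le)
  hence "real n * (r - 1) \<le> real (2^n) * (r - 1)" using r by (simp add: mult_right_mono)
  moreover have "C < real n * (r - 1)" using n r by (simp add: divide_less_eq)
  ultimately show False using 1 by linarith
qed

lemma QS_bound: "Q (S x) \<le> M^2 * Q x"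
proof (rule ccontr)
  assume neg: "\<not> ?thesis"
  define a where "a = Q (S x)"
  define b where "b = Q x"
  define K where "K = cA * (norm x)^2"
  define L where "L = M^2"
  have L: "L \<ge> 1" using M_pos by (simp add: L_def one_le_power)
  have b0: "b \<ge> 0" by (simp add: b_def Q_nonneg)
  have gt: "a > L * b" using neg by (simp add: a_def b_def L_def)
  have main: "a^(2^n) \<le> b^(2^n - 1) * (K * L^(2^n))" for n
  proof -
    have "a^(2^n) \<le> b^(2^n - 1) * Q ((S^^(2^n)) x)" unfolding a_def b_def by (rule Q_pow2)
    also have "\<dots> \<le> b^(2^n - 1) * (K * L^(2^n))"
      using Q_Sm_le[of "2^n" x] b0 by (simp add: K_def L_def mult_left_mono)
    finally show ?thesis .
  qed
  show False
  proof (cases "b = 0")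
    case True
    have "a^2 \<le> 0" using main[of 1] True by simp
    hence "a = 0" by simp
    thus False using gt True by simp
  next
    case False
    hence bp: "b > 0" using b0 by simp
    define r where "r = a / (L * b)"
    have r1: "r > 1" using gt bp L by (simp add: r_def)
    have ar: "a = r * (L * b)" using bp L by (simp add: r_def)
    have "r^(2^n) \<le> K / b" for n
    proof -
      define m :: nat where "m = 2^n"
      have m1: "m \<ge> 1" by (simp add: m_def)
      have pos: "L^m * b^(m-1) > 0" using bp L by simp
      have "r^m * b * (L^m * b^(m-1)) = r^m * L^m * (b^(m-1) * b)" by (simp add: algebra_simps)
      also have "b^(m-1) * b = b^m" using m1 by (simp add: power_Suc2[symmetric])
      also have "r^m * L^m * b^m = a^m" by (simp add: ar power_mult_distrib)
      also have "\<dots> \<le> b^(m - 1) * (K * L^m)" using main[of n] by (simp add: m_def)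
      also have "\<dots> = K * (L^m * b^(m-1))" by (simp add: algebra_simps)
      finally have "r^m * b * (L^m * b^(m-1)) \<le> K * (L^m * b^(m-1))" .
      hence "r^m * b \<le> K" using pos by (meson mult_right_le_imp_le)
      thus ?thesis using bp by (simp add: m_def pos_le_divide_eq)
    qed
    thus False using geom_bound[OF r1] by blast
  qed
qed

lemma QT_bound: "Q (T x) \<le> M * Q x"
proof -
  have "Q (T x) = A x \<bullet> S x" by (simp add: Q_def radj S_def)
  also have "\<dots> \<le> A_norm J A x * A_norm J A (S x)" by (rule rCS)
  also have "\<dots> = sqrt (Q x * Q (S x))" by (simp add: A_norm_eq Q_def real_sqrt_mult)
  also have "\<dots> \<le> sqrt (Q x * (M^2 * Q x))" using QS_bound Q_nonneg by (simp add: mult_left_mono)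
  also have "\<dots> = M * Q x" using M_pos Q_nonneg[of x] by (simp add: real_sqrt_mult power2_eq_square[symmetric] algebra_simps)
  finally show ?thesis .
qed

lemma nT: "A_norm J A (T x) \<le> sqrt M * A_norm J A x"
proof -
  have "A_norm J A (T x) = sqrt (Q (T x))" by (simp add: A_norm_eq Q_def)
  also have "\<dots> \<le> sqrt (M * Q x)" using QT_bound by simp
  also have "\<dots> = sqrt M * A_norm J A x" by (simp add: A_norm_eq Q_def real_sqrt_mult)
  finally show ?thesis .
qed

end


context setting begin

lemma range_pos: assumes "z \<in> range A" "A z \<bullet> z = 0" shows "z = 0"
proof -
  have "(norm (A z))^2 \<le> 0" using Az_sq[of z] assms(2) by simp
  hence Az: "A z = 0" by simp
  obtain w where w: "z = A w" using assms(1) by blast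
  have "z \<bullet> z = A w \<bullet> z" using w by simp
  also have "\<dots> = w \<bullet> A z" by (rule A_sym)
  finally have "z \<bullet> z = 0" using Az by simp
  thus ?thesis by simp
qed

lemma scaleC_eq: "scaleC J c x = Re c *\<^sub>R x + Im c *\<^sub>R J x" by (simp add: scaleC_def)

lemma exists_pair:
  assumes "range_dim_ge_2 J A" and q: "cmod q \<le> 1"
  shows "\<exists>x y. A_norm J A x = 1 \<and> A_norm J A y = 1 \<and> A_inner J A x y = q"
proof -
  obtain u v where u: "u \<in> range A" and v: "v \<in> range A"
    and ind: "\<And>a b. scaleC J a u + scaleC J b v = 0 \<Longrightarrow> a = 0 \<and> b = 0"
    using assms(1) unfolding range_dim_ge_2_def by blast
  obtain u0 where u0: "u = A u0" using u by blast
  obtain v0 where v0: "v = A v0" using v by blast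
  have un: "u \<noteq> 0"
  proof
    assume "u = 0"
    hence "scaleC J 1 u + scaleC J 0 v = 0" by (simp add: scaleC_eq)
    thus False using ind by fastforce
  qed
  define nu where "nu = A u \<bullet> u"
  have nu: "nu > 0" using range_pos[OF u] un Axx[of u] unfolding nu_def by fastforce
  define e1 where "e1 = (1 / sqrt nu) *\<^sub>R u"
  have e1e1: "A e1 \<bullet> e1 = 1" using nu by (simp add: e1_def nu_def[symmetric] power2_eq_square[symmetric])
  have e1J: "A e1 \<bullet> J e1 = 0" by (rule AxJx)
  have Je1e1: "A (J e1) \<bullet> e1 = 0" using b_Jsym[of e1 e1] e1J by simp
  have Je1Je1: "A (J e1) \<bullet> J e1 = 1" using e1e1 by simp
  define al where "al = A v \<bullet> e1"
  define be where "be = A v \<bullet> J e1"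
  define w where "w = v - al *\<^sub>R e1 - be *\<^sub>R J e1"
  have we1: "A w \<bullet> e1 = 0"
    by (simp add: w_def inner_diff_left e1e1 Je1e1 al_def)
  have wJe1: "A w \<bullet> J e1 = 0"
    by (simp add: w_def inner_diff_left e1J Je1Je1 e1e1 be_def)
  have wr: "w \<in> range A"
  proof -
    have "w = A (v0 - al *\<^sub>R ((1 / sqrt nu) *\<^sub>R u0) - be *\<^sub>R J ((1 / sqrt nu) *\<^sub>R u0))"
      by (simp add: w_def e1_def u0 v0 AJ)
    thus ?thesis by blast
  qed
  have wn: "w \<noteq> 0"
  proof
    assume w0: "w = 0"
    have "scaleC J (Complex (- al / sqrt nu) (- be / sqrt nu)) u + scaleC J 1 v = w"
      by (simp add: scaleC_eq w_def e1_def algebra_simps)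
    hence "scaleC J (Complex (- al / sqrt nu) (- be / sqrt nu)) u + scaleC J 1 v = 0" using w0 by simp
    thus False using ind by fastforce
  qed
  define nw where "nw = A w \<bullet> w"
  have nw: "nw > 0" using range_pos[OF wr] wn Axx[of w] unfolding nw_def by fastforce
  define e2 where "e2 = (1 / sqrt nw) *\<^sub>R w"
  have e2e2: "A e2 \<bullet> e2 = 1" using nw by (simp add: e2_def nw_def[symmetric] power2_eq_square[symmetric])
  have e2e1: "A e2 \<bullet> e1 = 0" using we1 by (simp add: e2_def)
  have e2Je1: "A e2 \<bullet> J e1 = 0" using wJe1 by (simp add: e2_def)
  have e1e2: "A e1 \<bullet> e2 = 0" using e2e1 b_comm[of e1 e2] by simp
  have Je1e2: "A (J e1) \<bullet> e2 = 0" using e2Je1 b_comm[of "J e1" e2] by simp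
  have e1Je2: "A e1 \<bullet> J e2 = 0" using Je1e2 b_Jsym[of e1 e2] by simp
  have e2Je2: "A e2 \<bullet> J e2 = 0" by (rule AxJx)
  define a where "a = Re q"
  define b where "b = Im q"
  define s where "s = sqrt (1 - (cmod q)^2)"
  have s2: "s^2 = 1 - a^2 - b^2"
  proof -
    have "(cmod q)^2 \<le> 1" using q by (simp add: power_le_one)
    thus ?thesis by (simp add: s_def a_def b_def cmod_power2)
  qed
  define y where "y = a *\<^sub>R e1 - b *\<^sub>R J e1 + s *\<^sub>R e2"
  have yy: "A y \<bullet> y = 1"
  proof -
    have "A y \<bullet> y = a^2 + b^2 + s^2"
      by (simp add: y_def inner_add_left inner_add_right inner_diff_left inner_diff_right
          e1e1 e1J Je1e1 Je1Je1 e2e2 e2e1 e2Je1 e1e2 Je1e2 power2_eq_square)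
    thus ?thesis using s2 by simp
  qed
  have e1y: "A e1 \<bullet> y = a"
    by (simp add: y_def inner_add_right inner_diff_right e1e1 e1J e1e2)
  have e1Jy: "A e1 \<bullet> J y = b"
    by (simp add: y_def inner_add_right inner_diff_right e1e1 e1J e1Je2)
  have "A_norm J A e1 = 1" by (simp add: A_norm_eq e1e1)
  moreover have "A_norm J A y = 1" by (simp add: A_norm_eq yy)
  moreover have "A_inner J A e1 y = q" by (simp add: A_inner_eq e1y e1Jy a_def b_def)
  ultimately show ?thesis by blast
qed

lemma exists_nz: assumes "range_dim_ge_2 J A" shows "\<exists>u\<in>range A. u \<noteq> 0"
proof -
  obtain u v where u: "u \<in> range A" and v: "v \<in> range A"
    and ind: "\<And>a b. scaleC J a u + scaleC J b v = 0 \<Longrightarrow> a = 0 \<and> b = 0"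
    using assms(1) unfolding range_dim_ge_2_def by blast
  have un: "u \<noteq> 0"
  proof
    assume "u = 0"
    hence "scaleC J 1 u + scaleC J 0 v = 0" by (simp add: scaleC_eq)
    thus False using ind by fastforce
  qed
  thus ?thesis using u by blast
qed

end

context setting2 begin

lemma ratio_le: "A_norm J A (T x) / A_norm J A x \<le> sqrt M"
proof (cases "A_norm J A x = 0")
  case True thus ?thesis using M_pos by simp
next
  case False
  hence p: "A_norm J A x > 0" using nA_nonneg[of x] by simp
  thus ?thesis using nT[of x] by (simp add: divide_le_eq)
qed

lemma Rset_bdd: "bdd_above {A_norm J A (T x) / A_norm J A x | x. x \<in> closure (range A) \<and> x \<noteq> 0}"
  unfolding bdd_above_def using ratio_le by blast

lemma N_range: assumes "y \<in> range A" shows "A_norm J A (T y) \<le> A_opnorm J A T * A_norm J A y"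
proof (cases "y = 0")
  case True thus ?thesis by (simp add: A_norm_eq)
next
  case False
  show ?thesis
  proof (cases "A_norm J A y = 0")
    case True
    thus ?thesis using nT[of y] nA_nonneg[of "T y"] by simp
  next
    case F2: False
    hence p: "A_norm J A y > 0" using nA_nonneg[of y] by simp
    have "A_norm J A (T y) / A_norm J A y \<le> A_opnorm J A T"
      unfolding A_opnorm_def
      by (rule cSup_upper[OF _ Rset_bdd]) (use assms False closure_subset in blast)
    thus ?thesis using p by (simp add: divide_le_eq mult.commute)
  qed
qed

lemma N_nonneg: assumes "u \<in> range A" "u \<noteq> 0" shows "A_opnorm J A T \<ge> 0"
proof -
  have "0 \<le> A_norm J A (T u) / A_norm J A u" using nA_nonneg by simp
  also have "\<dots> \<le> A_opnorm J A T"
    unfolding A_opnorm_def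
    by (rule cSup_upper[OF _ Rset_bdd]) (use assms closure_subset in blast)
  finally show ?thesis .
qed

lemma N_all: assumes "u \<in> range A" "u \<noteq> 0"
  shows "A_norm J A (T x) \<le> A_opnorm J A T * A_norm J A x"
proof (rule ccontr)
  define N where "N = A_opnorm J A T"
  assume "\<not> ?thesis"
  hence g: "A_norm J A (T x) - N * A_norm J A x > 0" by (simp add: N_def)
  have N0: "N \<ge> 0" using N_nonneg[OF assms] by (simp add: N_def)
  define d where "d = (A_norm J A (T x) - N * A_norm J A x) / (N + sqrt M + 1)"
  have den: "N + sqrt M + 1 > 0" using N0 M_pos real_sqrt_ge_zero[of M] by linarith
  have d: "d > 0" using g den by (simp add: d_def)
  obtain w where w: "A_norm J A (x - A w) < d" using approx[OF d] by blast
  have "T x = T (A w) + T (x - A w)" by simp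
  hence "A_norm J A (T x) \<le> A_norm J A (T (A w)) + A_norm J A (T (x - A w))" using tri by metis
  also have "\<dots> \<le> N * A_norm J A (A w) + sqrt M * A_norm J A (x - A w)"
    using N_range[of "A w"] nT[of "x - A w"] by (simp add: N_def add_mono)
  also have "A_norm J A (A w) \<le> A_norm J A x + A_norm J A (x - A w)"
    using tri_diff[of x "x - A w"] by simp
  hence "N * A_norm J A (A w) \<le> N * (A_norm J A x + d)" using N0 w by (simp add: mult_left_mono)
  hence "N * A_norm J A (A w) + sqrt M * A_norm J A (x - A w) \<le> N * (A_norm J A x + d) + sqrt M * d"
  proof -
    have "sqrt M * A_norm J A (x - A w) \<le> sqrt M * d" using w M_pos by (simp add: mult_left_mono less_imp_le)
    thus ?thesis using \<open>N * A_norm J A (A w) \<le> N * (A_norm J A x + d)\<close> by linarith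
  qed
  finally have "A_norm J A (T x) \<le> N * A_norm J A x + (N + sqrt M) * d" by (simp add: algebra_simps)
  moreover have "(N + sqrt M) * d < A_norm J A (T x) - N * A_norm J A x"
  proof -
    have "(N + sqrt M) * d < (N + sqrt M + 1) * d" using d by simp
    also have "\<dots> = A_norm J A (T x) - N * A_norm J A x" using den by (simp add: d_def)
    finally show ?thesis .
  qed
  ultimately show False by simp
qed

lemma wA_upper: assumes "A_norm J A x = 1" shows "cmod (A_inner J A (T x) x) \<le> w_A J A T"
  unfolding w_A_def
proof (rule cSup_upper)
  show "cmod (A_inner J A (T x) x) \<in> {cmod (A_inner J A (T x) x) |x. A_norm J A x = 1}" using assms by blast
  show "bdd_above {cmod (A_inner J A (T x) x) |x. A_norm J A x = 1}"
    unfolding bdd_above_def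
  proof (intro exI ballI)
    fix r assume "r \<in> {cmod (A_inner J A (T x) x) |x. A_norm J A x = 1}"
    then obtain z where r: "r = cmod (A_inner J A (T z) z)" and z: "A_norm J A z = 1" by blast
    have "r \<le> A_norm J A (T z) * A_norm J A z" using r cCS by simp
    also have "\<dots> \<le> sqrt M" using nT[of z] z by simp
    finally show "r \<le> sqrt M" .
  qed
qed

lemma elem_bound:
  assumes u: "u \<in> range A" "u \<noteq> 0"
    and x: "A_norm J A x = 1" and y: "A_norm J A y = 1" and xy: "A_inner J A x y = q"
  shows "cmod (A_inner J A (T x) y) \<le> cmod q * w_A J A T + sqrt (1 - (cmod q)^2) * A_opnorm J A T"
proof -
  define a where "a = Re q"
  define b where "b = Im q"
  have xx: "A x \<bullet> x = 1" using x nA_sq[of x] by simp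
  have yy: "A y \<bullet> y = 1" using y nA_sq[of y] by simp
  have f0: "A x \<bullet> y = a" "A x \<bullet> J y = b" using xy by (auto simp: A_inner_eq a_def b_def)
  have f1: "A y \<bullet> x = a" using f0 b_comm[of y x] by simp
  have f3: "A (J x) \<bullet> y = - b" using f0 b_Jsym[of x y] by simp
  have f2: "A y \<bullet> J x = - b" using f3 b_comm[of y "J x"] by simp
  have f4: "A (J x) \<bullet> x = 0" using b_Jsym[of x x] AxJx[of x] by simp
  have f5: "A x \<bullet> J x = 0" by (rule AxJx)
  define w where "w = y - a *\<^sub>R x + b *\<^sub>R J x"
  have w1: "A w \<bullet> y = 1 - a^2 - b^2"
    by (simp add: w_def inner_add_left inner_diff_left yy f0 f3 power2_eq_square)
  have w2: "A w \<bullet> x = 0"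
    by (simp add: w_def inner_add_left inner_diff_left xx f1 f4)
  have w3: "A w \<bullet> J x = 0"
    by (simp add: w_def inner_add_left inner_diff_left xx f2 f5)
  have "A w \<bullet> w = A w \<bullet> (y - a *\<^sub>R x + b *\<^sub>R J x)" by (simp only: w_def[symmetric])
  also have "\<dots> = 1 - a^2 - b^2" by (simp add: inner_add_right inner_diff_right w1 w2 w3)
  finally have ww: "A w \<bullet> w = 1 - a^2 - b^2" .
  have q2: "(cmod q)^2 = a^2 + b^2" by (simp add: cmod_power2 a_def b_def)
  have nw: "A_norm J A w = sqrt (1 - (cmod q)^2)" by (simp add: A_norm_eq ww q2)
  have dec: "A_inner J A (T x) y = q * A_inner J A (T x) x + A_inner J A (T x) w"
  proof (rule complex_eqI)
    show "Re (A_inner J A (T x) y) = Re (q * A_inner J A (T x) x + A_inner J A (T x) w)"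
      by (simp add: A_inner_eq w_def inner_add_right inner_diff_right a_def b_def)
    show "Im (A_inner J A (T x) y) = Im (q * A_inner J A (T x) x + A_inner J A (T x) w)"
      by (simp add: A_inner_eq w_def inner_add_right inner_diff_right a_def b_def algebra_simps)
  qed
  have "cmod (A_inner J A (T x) y) \<le> cmod q * cmod (A_inner J A (T x) x) + cmod (A_inner J A (T x) w)"
    unfolding dec by (metis norm_mult norm_triangle_ineq)
  also have "\<dots> \<le> cmod q * w_A J A T + A_norm J A (T x) * A_norm J A w"
    using wA_upper[OF x] cCS[of "T x" w] by (simp add: add_mono mult_left_mono)
  also have "A_norm J A (T x) * A_norm J A w \<le> A_opnorm J A T * A_norm J A w"
    using N_all[OF u, of x] x nA_nonneg[of w] by (simp add: mult_right_mono)
  finally show ?thesis using nw by (simp add: mult.commute)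
qed

end

theorem mainTheorem3:
  fixes J :: "'a::{real_inner, complete_space} \<Rightarrow> 'a"
    and A T :: "'a \<Rightarrow> 'a"
    and q :: complex
  assumes "complex_structure J"
    and "positive_op J A"
    and "range_dim_ge_2 J A"
    and "T \<in> B_A J A"
    and "cmod q \<le> 1"
  shows "w_qA J A q T \<le> sqrt ((cmod q)\<^sup>2 * (w_A J A T)\<^sup>2 + (1 - (cmod q)\<^sup>2) * (A_opnorm J A T)\<^sup>2
            + 2 * cmod q * sqrt (1 - (cmod q)\<^sup>2) * w_A J A T * A_opnorm J A T)"
proof -
  interpret setting J A using assms(1,2) by unfold_locales
  obtain W where Tb: "bounded_clinear_op J T" and Wb: "bounded_clinear_op J W"
    and adj: "\<forall>x y. A_inner J A (T x) y = A_inner J A x (W y)"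
    using assms(4) unfolding B_A_def by blast
  interpret s2: setting2 J A T W using assms(1,2) Tb Wb adj by unfold_locales
  obtain u where u: "u \<in> range A" "u \<noteq> 0" using exists_nz[OF assms(3)] by blast
  define B where "B = cmod q * w_A J A T + sqrt (1 - (cmod q)^2) * A_opnorm J A T"
  have "w_qA J A q T \<le> B"
    unfolding w_qA_def
  proof (rule cSup_least)
    show "{cmod (A_inner J A (T x) y) |x y. A_norm J A x = 1 \<and> A_norm J A y = 1 \<and> A_inner J A x y = q} \<noteq> {}"
      using exists_pair[OF assms(3,5)] by blast
  next
    fix r assume "r \<in> {cmod (A_inner J A (T x) y) |x y. A_norm J A x = 1 \<and> A_norm J A y = 1 \<and> A_inner J A x y = q}"
    then obtain x y where r: "r = cmod (A_inner J A (T x) y)" and x: "A_norm J A x = 1"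
      and y: "A_norm J A y = 1" and xy: "A_inner J A x y = q" by blast
    show "r \<le> B" unfolding r B_def by (rule s2.elem_bound[OF u x y xy])
  qed
  also have "B \<le> sqrt ((cmod q)\<^sup>2 * (w_A J A T)\<^sup>2 + (1 - (cmod q)\<^sup>2) * (A_opnorm J A T)\<^sup>2
            + 2 * cmod q * sqrt (1 - (cmod q)\<^sup>2) * w_A J A T * A_opnorm J A T)"
  proof -
    have q1: "(cmod q)^2 \<le> 1" using assms(5) norm_ge_zero[of q] by (simp add: power_le_one)
    have s2: "(sqrt (1 - (cmod q)^2))^2 = 1 - (cmod q)^2" using q1 by simp
    have e1: "(cmod q)\<^sup>2 * (w_A J A T)\<^sup>2 + (1 - (cmod q)\<^sup>2) * (A_opnorm J A T)\<^sup>2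
            + 2 * cmod q * sqrt (1 - (cmod q)\<^sup>2) * w_A J A T * A_opnorm J A T
          = (cmod q)\<^sup>2 * (w_A J A T)\<^sup>2 + (sqrt (1 - (cmod q)\<^sup>2))\<^sup>2 * (A_opnorm J A T)\<^sup>2
            + 2 * cmod q * sqrt (1 - (cmod q)\<^sup>2) * w_A J A T * A_opnorm J A T"
      by (simp only: s2)
    have e2: "(c::real)\<^sup>2 * w\<^sup>2 + ss\<^sup>2 * n\<^sup>2 + 2 * c * ss * w * n = (c * w + ss * n)^2" for c w ss n
      by (simp add: power2_sum power_mult_distrib algebra_simps)
    have "(cmod q)\<^sup>2 * (w_A J A T)\<^sup>2 + (1 - (cmod q)\<^sup>2) * (A_opnorm J A T)\<^sup>2
            + 2 * cmod q * sqrt (1 - (cmod q)\<^sup>2) * w_A J A T * A_opnorm J A T = B^2"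
      unfolding e1 e2 B_def ..
    moreover have "B \<le> sqrt (B^2)" by simp
    ultimately show ?thesis by simp
  qed
  finally show ?thesis .
qed

end
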